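(* Let $G$ be a discrete group and $X$ a minimal $G$-flow, and suppose there is an infinite subgroup $H\le G$ such that the restricted action $H\curvearrowright X$ is equicontinuous. Then $X$ has the separated covering property.
   Context: A $G$-flow is a compact Hausdorff space with an action of $G$ by homeomorphisms; it is minimal if every orbit is dense. An action $H\curvearrowright X$ is equicontinuous if for every neighborhood $U$ of the diagonal in $X\times X$ there is a neighborhood $V$ of the diagonal such that $(x,y)\in V$ implies $(hx,hy)\in U$ for all $h\in H$. For finite $D\subseteq G$, a set $S\subseteq G$ is $D$-separated if $Dg\cap Dh=\emptyset$ for distinct $g,h\in S$. A minimal $G$-flow has the separated covering property if for every finite $D\subseteq G$ and non-empty open $U$ there is a $D$-separated $S\subseteq G$ with $S^{-1}U=X$. *)

theory Defs
  imports "HOL-Analysis.Analysis" "HOL-Algebra.Group"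
begin

definition G_flow :: "('g, 'b) monoid_scheme \<Rightarrow> 'a topology \<Rightarrow> ('g \<Rightarrow> 'a \<Rightarrow> 'a) \<Rightarrow> bool" where
  "G_flow G X act \<longleftrightarrow>
     group G \<and> compact_space X \<and> Hausdorff_space X \<and>
     (\<forall>g \<in> carrier G. homeomorphic_map X X (act g)) \<and>
     (\<forall>x \<in> topspace X. act \<one>\<^bsub>G\<^esub> x = x) \<and>
     (\<forall>g \<in> carrier G. \<forall>h \<in> carrier G. \<forall>x \<in> topspace X.
        act (g \<otimes>\<^bsub>G\<^esub> h) x = act g (act h x))"

definition minimal_flow :: "('g, 'b) monoid_scheme \<Rightarrow> 'a topology \<Rightarrow> ('g \<Rightarrow> 'a \<Rightarrow> 'a) \<Rightarrow> bool" where
  "minimal_flow G X act \<longleftrightarrow>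
     G_flow G X act \<and>
     (\<forall>x \<in> topspace X. X closure_of ((\<lambda>g. act g x) ` carrier G) = topspace X)"

definition diag_nbhd :: "'a topology \<Rightarrow> ('a \<times> 'a) set \<Rightarrow> bool" where
  "diag_nbhd X U \<longleftrightarrow>
     U \<subseteq> topspace X \<times> topspace X \<and>
     (\<exists>W. openin (prod_topology X X) W \<and> {(x, x) | x. x \<in> topspace X} \<subseteq> W \<and> W \<subseteq> U)"

definition equicontinuous_action :: "'g set \<Rightarrow> 'a topology \<Rightarrow> ('g \<Rightarrow> 'a \<Rightarrow> 'a) \<Rightarrow> bool" where
  "equicontinuous_action H X act \<longleftrightarrow>
     (\<forall>U. diag_nbhd X U \<longrightarrow>
        (\<exists>V. diag_nbhd X V \<and>
           (\<forall>x y. (x, y) \<in> V \<longrightarrow> (\<forall>h \<in> H. (act h x, act h y) \<in> U))))"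

definition separated :: "('g, 'b) monoid_scheme \<Rightarrow> 'g set \<Rightarrow> 'g set \<Rightarrow> bool" where
  "separated G D S \<longleftrightarrow>
     (\<forall>g \<in> S. \<forall>h \<in> S. g \<noteq> h \<longrightarrow>
        (\<lambda>d. d \<otimes>\<^bsub>G\<^esub> g) ` D \<inter> (\<lambda>d. d \<otimes>\<^bsub>G\<^esub> h) ` D = {})"

definition separated_covering_property ::
    "('g, 'b) monoid_scheme \<Rightarrow> 'a topology \<Rightarrow> ('g \<Rightarrow> 'a \<Rightarrow> 'a) \<Rightarrow> bool" where
  "separated_covering_property G X act \<longleftrightarrow>
     (\<forall>D U. finite D \<and> D \<subseteq> carrier G \<and> openin X U \<and> U \<noteq> {} \<longrightarrow>
        (\<exists>S \<subseteq> carrier G. separated G D S \<and>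
           (\<Union>s \<in> S. act (inv\<^bsub>G\<^esub> s) ` U) = topspace X))"

end

theory Submission
  imports Defs
begin

lemma flow_maps:
  assumes "G_flow G X act" "g \<in> carrier G" "x \<in> topspace X"
  shows "act g x \<in> topspace X"
proof -
  have "homeomorphic_map X X (act g)" using assms unfolding G_flow_def by blast
  from homeomorphic_imp_surjective_map[OF this] show ?thesis using assms(3) by blast
qed

lemma flow_open:
  assumes "G_flow G X act" "g \<in> carrier G" "openin X V"
  shows "openin X (act g ` V)"
proof -
  have "homeomorphic_map X X (act g)" using assms unfolding G_flow_def by blast
  from homeomorphic_imp_open_map[OF this] show ?thesis using assms(3) unfolding open_map_def by blast
qed

lemma flow_cancel:
  assumes "G_flow G X act" "g \<in> carrier G" "x \<in> topspace X"
  shows "act g (act (inv\<^bsub>G\<^esub> g) x) = x" "act (inv\<^bsub>G\<^esub> g) (act g x) = x"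
proof -
  have gr: "group G" using assms unfolding G_flow_def by blast
  have ig: "inv\<^bsub>G\<^esub> g \<in> carrier G" using gr assms by (simp add: group.inv_closed)
  have "act g (act (inv\<^bsub>G\<^esub> g) x) = act (g \<otimes>\<^bsub>G\<^esub> inv\<^bsub>G\<^esub> g) x"
    using assms ig unfolding G_flow_def by simp
  also have "\<dots> = x" using gr assms unfolding G_flow_def by (simp add: group.r_inv)
  finally show "act g (act (inv\<^bsub>G\<^esub> g) x) = x" .
  have "act (inv\<^bsub>G\<^esub> g) (act g x) = act (inv\<^bsub>G\<^esub> g \<otimes>\<^bsub>G\<^esub> g) x"
    using assms ig unfolding G_flow_def by simp
  also have "\<dots> = x" using gr assms unfolding G_flow_def by (simp add: group.l_inv)
  finally show "act (inv\<^bsub>G\<^esub> g) (act g x) = x" .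
qed

lemma cover_lemma:
  assumes mf: "minimal_flow G X act" and V: "openin X V" "V \<noteq> {}"
  shows "\<exists>F. finite F \<and> F \<subseteq> carrier G \<and> topspace X \<subseteq> (\<Union>f\<in>F. act (inv\<^bsub>G\<^esub> f) ` V)"
proof -
  have fl: "G_flow G X act" using mf unfolding minimal_flow_def by blast
  have gr: "group G" using fl unfolding G_flow_def by blast
  have pt: "\<exists>g\<in>carrier G. x \<in> act (inv\<^bsub>G\<^esub> g) ` V" if x: "x \<in> topspace X" for x
  proof -
    have cl: "X closure_of ((\<lambda>g. act g x) ` carrier G) = topspace X"
      using mf x unfolding minimal_flow_def by blast
    have "V \<inter> X closure_of ((\<lambda>g. act g x) ` carrier G) \<noteq> {}"
      using cl V openin_subset by fastforce
    then have "V \<inter> ((\<lambda>g. act g x) ` carrier G) \<noteq> {}"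
      using openin_Int_closure_of_eq_empty[OF V(1)] by blast
    then obtain g where g: "g \<in> carrier G" "act g x \<in> V" by blast
    have "x = act (inv\<^bsub>G\<^esub> g) (act g x)" using flow_cancel[OF fl g(1) x] by simp
    then show ?thesis using g by blast
  qed
  have cs: "compact_space X" using fl unfolding G_flow_def by blast
  let ?U = "(\<lambda>g. act (inv\<^bsub>G\<^esub> g) ` V) ` carrier G"
  have "\<forall>W\<in>?U. openin X W"
    using flow_open[OF fl _ V(1)] gr by (auto simp: group.inv_closed)
  moreover have "topspace X \<subseteq> \<Union>?U" using pt by blast
  ultimately obtain \<F> where "finite \<F>" "\<F> \<subseteq> ?U" "topspace X \<subseteq> \<Union>\<F>"
    using cs unfolding compact_space_alt by meson
  then obtain F where "F \<subseteq> carrier G" "finite F" "\<F> = (\<lambda>g. act (inv\<^bsub>G\<^esub> g) ` V) ` F"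
    by (meson finite_subset_image)
  then show ?thesis using \<open>topspace X \<subseteq> \<Union>\<F>\<close> by blast
qed


lemma recur_lemma:
  assumes fl: "G_flow G X act" and H: "subgroup H G" "infinite H"
    and eq: "equicontinuous_action H X act"
    and U: "openin X U" "U \<noteq> {}"
  shows "\<exists>V R. openin X V \<and> V \<noteq> {} \<and> R \<subseteq> carrier G \<and> infinite R \<and>
           (\<forall>r\<in>R. \<forall>y\<in>V. act r y \<in> U)"
proof -
  have gr: "group G" using fl unfolding G_flow_def by blast
  have Hs: "H \<subseteq> carrier G" using H(1) by (rule subgroup.subset)
  have hau: "Hausdorff_space X" and cs: "compact_space X" using fl unfolding G_flow_def by blast+
  obtain x0 where x0: "x0 \<in> U" using U by blast
  have Ut: "U \<subseteq> topspace X" using U(1) openin_subset by blast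
  have x0t: "x0 \<in> topspace X" using x0 Ut by blast
  have cl: "closedin X {x0}" using Hausdorff_imp_t1_space[OF hau] x0t
    unfolding t1_space_closedin_singleton by blast
  define C where "C = topspace X - {x0}"
  have Co: "openin X C" unfolding C_def using cl by blast
  define N where "N = U \<times> U \<union> C \<times> C"
  have No: "openin (prod_topology X X) N" unfolding N_def
    using U(1) Co by (intro openin_Un) (auto simp: openin_prod_Times_iff)
  have dN: "diag_nbhd X N" unfolding diag_nbhd_def
  proof (intro conjI exI[of _ N])
    show "N \<subseteq> topspace X \<times> topspace X" unfolding N_def C_def using Ut by blast
    show "{(x, x) |x. x \<in> topspace X} \<subseteq> N" unfolding N_def C_def using x0 by auto
  qed (use No in auto)
  obtain E where dE: "diag_nbhd X E" and Eh: "\<And>x y h. (x, y) \<in> E \<Longrightarrow> h \<in> H \<Longrightarrow> (act h x, act h y) \<in> N"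
    using eq dN unfolding equicontinuous_action_def by meson
  obtain W where Wo: "openin (prod_topology X X) W" and Wd: "{(x, x) |x. x \<in> topspace X} \<subseteq> W"
    and WE: "W \<subseteq> E" using dE unfolding diag_nbhd_def by blast
  let ?A = "{A. openin X A \<and> A \<times> A \<subseteq> W}"
  have cov: "topspace X \<subseteq> \<Union>?A"
  proof
    fix x assume x: "x \<in> topspace X"
    then have "(x, x) \<in> W" using Wd by blast
    then obtain A B where "openin X A" "openin X B" "x \<in> A" "x \<in> B" "A \<times> B \<subseteq> W"
      using Wo unfolding openin_prod_topology_alt by meson
    then have "A \<inter> B \<in> ?A" "x \<in> A \<inter> B" by auto
    then show "x \<in> \<Union>?A" by blast
  qed
  obtain \<F> where Ff: "finite \<F>" and FA: "\<F> \<subseteq> ?A" and Fc: "topspace X \<subseteq> \<Union>\<F>"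
    using cs cov unfolding compact_space_alt by (metis (no_types, lifting) mem_Collect_eq)
  have "H \<subseteq> (\<Union>A\<in>\<F>. {h\<in>H. act (inv\<^bsub>G\<^esub> h) x0 \<in> A})"
  proof
    fix h assume h: "h \<in> H"
    then have "act (inv\<^bsub>G\<^esub> h) x0 \<in> topspace X"
      using flow_maps[OF fl _ x0t] Hs gr by (auto simp: group.inv_closed)
    then show "h \<in> (\<Union>A\<in>\<F>. {h\<in>H. act (inv\<^bsub>G\<^esub> h) x0 \<in> A})" using Fc h by blast
  qed
  then obtain A where A: "A \<in> \<F>" and inf: "infinite {h\<in>H. act (inv\<^bsub>G\<^esub> h) x0 \<in> A}"
    using H(2) Ff by (meson finite_UN_I finite_subset)
  define R where "R = {h\<in>H. act (inv\<^bsub>G\<^esub> h) x0 \<in> A}"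
  have Ao: "openin X A" and AW: "A \<times> A \<subseteq> W" using A FA by auto
  have "R \<noteq> {}" using inf unfolding R_def by (metis finite.emptyI)
  then have "A \<noteq> {}" unfolding R_def by blast
  moreover have "\<forall>r\<in>R. \<forall>y\<in>A. act r y \<in> U"
  proof (intro ballI)
    fix r y assume r: "r \<in> R" and y: "y \<in> A"
    then have "(y, act (inv\<^bsub>G\<^esub> r) x0) \<in> E" using AW WE unfolding R_def by blast
    then have "(act r y, act r (act (inv\<^bsub>G\<^esub> r) x0)) \<in> N" using Eh r unfolding R_def by blast
    moreover have "act r (act (inv\<^bsub>G\<^esub> r) x0) = x0" using flow_cancel[OF fl _ x0t] r Hs unfolding R_def by blast
    ultimately show "act r y \<in> U" unfolding N_def C_def by blast
  qed
  moreover have "R \<subseteq> carrier G" using Hs unfolding R_def by blast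
  ultimately show ?thesis using Ao inf unfolding R_def by blast
qed


lemma sep_lemma:
  assumes gr: "group G" and D: "finite D" "D \<subseteq> carrier G"
    and R: "R \<subseteq> carrier G" "infinite R"
    and F: "finite F" "F \<subseteq> carrier G"
  shows "\<exists>S. finite S \<and> S \<subseteq> carrier G \<and> separated G D S \<and>
            (\<forall>f\<in>F. \<exists>r\<in>R. r \<otimes>\<^bsub>G\<^esub> f \<in> S)"
  using F
proof (induction F rule: finite_induct)
  case empty
  then show ?case by (intro exI[of _ "{}"]) (auto simp: separated_def)
next
  case (insert f F)
  then obtain S where S: "finite S" "S \<subseteq> carrier G" "separated G D S"
      "\<forall>f\<in>F. \<exists>r\<in>R. r \<otimes>\<^bsub>G\<^esub> f \<in> S" by auto
  have f: "f \<in> carrier G" using insert by auto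
  define B where "B = (\<lambda>(s,d1,d2). inv\<^bsub>G\<^esub> d1 \<otimes>\<^bsub>G\<^esub> (d2 \<otimes>\<^bsub>G\<^esub> s) \<otimes>\<^bsub>G\<^esub> inv\<^bsub>G\<^esub> f) ` (S \<times> D \<times> D)"
  have "finite B" unfolding B_def using S(1) D(1) by auto
  then have "R - B \<noteq> {}" using R(2) by (metis Diff_eq_empty_iff finite_subset)
  then obtain r where r: "r \<in> R" "r \<notin> B" by blast
  have rc: "r \<in> carrier G" using r R by blast
  define s' where "s' = r \<otimes>\<^bsub>G\<^esub> f"
  have s'c: "s' \<in> carrier G" unfolding s'_def using rc f gr by (simp add: group.subgroupE(4) group.subgroup_self)
  have disj: "(\<lambda>d. d \<otimes>\<^bsub>G\<^esub> s') ` D \<inter> (\<lambda>d. d \<otimes>\<^bsub>G\<^esub> s) ` D = {}" if s: "s \<in> S" for s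
  proof (rule ccontr)
    assume "\<not> ?thesis"
    then obtain d1 d2 where d: "d1 \<in> D" "d2 \<in> D" "d1 \<otimes>\<^bsub>G\<^esub> s' = d2 \<otimes>\<^bsub>G\<^esub> s" by auto
    have d1c: "d1 \<in> carrier G" and d2c: "d2 \<in> carrier G" and sc: "s \<in> carrier G"
      using d D S s by auto
    have c: "d2 \<otimes>\<^bsub>G\<^esub> s \<in> carrier G" using d2c sc gr by (simp add: group.subgroupE(4) group.subgroup_self)
    have "s' = inv\<^bsub>G\<^esub> d1 \<otimes>\<^bsub>G\<^esub> (d2 \<otimes>\<^bsub>G\<^esub> s)"
      using group.inv_solve_left[OF gr s'c d1c c] d(3) by simp
    then have "r = inv\<^bsub>G\<^esub> d1 \<otimes>\<^bsub>G\<^esub> (d2 \<otimes>\<^bsub>G\<^esub> s) \<otimes>\<^bsub>G\<^esub> inv\<^bsub>G\<^esub> f"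
      using group.inv_solve_right[OF gr rc _ f, of "inv\<^bsub>G\<^esub> d1 \<otimes>\<^bsub>G\<^esub> (d2 \<otimes>\<^bsub>G\<^esub> s)"] c d1c gr
      unfolding s'_def by (simp add: group.subgroupE(4) group.subgroup_self group.inv_closed)
    then have "r \<in> B" unfolding B_def using s d(1,2)
      by (intro image_eqI[where x="(s,d1,d2)"]) auto
    then show False using r by blast
  qed
  have "separated G D (insert s' S)"
    unfolding separated_def
  proof (intro ballI impI)
    fix g h assume g: "g \<in> insert s' S" and h: "h \<in> insert s' S" and ne: "g \<noteq> h"
    show "(\<lambda>d. d \<otimes>\<^bsub>G\<^esub> g) ` D \<inter> (\<lambda>d. d \<otimes>\<^bsub>G\<^esub> h) ` D = {}"
    proof (cases "g = s'")
      case True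
      then have "h \<in> S" using h ne by blast
      then show ?thesis using disj True by blast
    next
      case False
      then have gS: "g \<in> S" using g by blast
      show ?thesis
      proof (cases "h = s'")
        case True
        then show ?thesis using disj[OF gS] by blast
      next
        case False
        then have "h \<in> S" using h by blast
        then show ?thesis using S(3) gS ne unfolding separated_def by blast
      qed
    qed
  qed
  moreover have "\<forall>g\<in>insert f F. \<exists>r\<in>R. r \<otimes>\<^bsub>G\<^esub> g \<in> insert s' S"
    using S(4) r(1) unfolding s'_def by blast
  ultimately show ?case using S s'c by (intro exI[of _ "insert s' S"]) auto
qed

theorem lemma3p1:
  fixes G :: "('g, 'b) monoid_scheme" and X :: "'a topology" and act :: "'g \<Rightarrow> 'a \<Rightarrow> 'a"
    and H :: "'g set"
  assumes "minimal_flow G X act"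
    and "subgroup H G" and "infinite H"
    and "equicontinuous_action H X act"
  shows "separated_covering_property G X act"
  unfolding separated_covering_property_def
proof (intro allI impI)
  fix D U
  assume a: "finite D \<and> D \<subseteq> carrier G \<and> openin X U \<and> U \<noteq> {}"
  have fl: "G_flow G X act" using assms(1) unfolding minimal_flow_def by blast
  have gr: "group G" using fl unfolding G_flow_def by blast
  obtain V R where V: "openin X V" "V \<noteq> {}" and R: "R \<subseteq> carrier G" "infinite R"
    and RV: "\<forall>r\<in>R. \<forall>y\<in>V. act r y \<in> U"
    using recur_lemma[OF fl assms(2,3,4), of U] a by blast
  obtain F where F: "finite F" "F \<subseteq> carrier G" and Fc: "topspace X \<subseteq> (\<Union>f\<in>F. act (inv\<^bsub>G\<^esub> f) ` V)"
    using cover_lemma[OF assms(1) V] by blast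
  obtain S where S: "S \<subseteq> carrier G" "separated G D S" and SF: "\<forall>f\<in>F. \<exists>r\<in>R. r \<otimes>\<^bsub>G\<^esub> f \<in> S"
    using sep_lemma[OF gr _ _ R F, of D] a by blast
  have Ut: "U \<subseteq> topspace X" using a openin_subset by blast
  have "(\<Union>s\<in>S. act (inv\<^bsub>G\<^esub> s) ` U) \<subseteq> topspace X"
  proof (intro UN_least image_subsetI)
    fix s u assume "s \<in> S" "u \<in> U"
    then show "act (inv\<^bsub>G\<^esub> s) u \<in> topspace X"
      using flow_maps[OF fl, of "inv\<^bsub>G\<^esub> s" u] Ut S(1) group.inv_closed[OF gr, of s] by blast
  qed
  moreover have "topspace X \<subseteq> (\<Union>s\<in>S. act (inv\<^bsub>G\<^esub> s) ` U)"
  proof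
    fix x assume "x \<in> topspace X"
    then obtain f y where f: "f \<in> F" and y: "y \<in> V" and x: "x = act (inv\<^bsub>G\<^esub> f) y" using Fc by blast
    obtain r where r: "r \<in> R" "r \<otimes>\<^bsub>G\<^esub> f \<in> S" using SF f by blast
    have fc: "f \<in> carrier G" and rc: "r \<in> carrier G" using f F r R by auto
    have yt: "y \<in> topspace X" using y V openin_subset by blast
    have ry: "act r y \<in> U" using RV r y by blast
    have ryt: "act r y \<in> topspace X" using ry Ut by blast
    have "act (inv\<^bsub>G\<^esub> (r \<otimes>\<^bsub>G\<^esub> f)) (act r y) = act (inv\<^bsub>G\<^esub> f \<otimes>\<^bsub>G\<^esub> inv\<^bsub>G\<^esub> r) (act r y)"
      using group.inv_mult_group[OF gr rc fc] by simp
    also have "\<dots> = act (inv\<^bsub>G\<^esub> f) (act (inv\<^bsub>G\<^esub> r) (act r y))"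
    proof -
      have "inv\<^bsub>G\<^esub> f \<in> carrier G" "inv\<^bsub>G\<^esub> r \<in> carrier G"
        using fc rc group.inv_closed[OF gr] by auto
      then show ?thesis using fl ryt unfolding G_flow_def by blast
    qed
    also have "\<dots> = x" using flow_cancel(2)[OF fl rc yt] x by simp
    finally have "x = act (inv\<^bsub>G\<^esub> (r \<otimes>\<^bsub>G\<^esub> f)) (act r y)" ..
    then show "x \<in> (\<Union>s\<in>S. act (inv\<^bsub>G\<^esub> s) ` U)" using r(2) ry by blast
  qed
  ultimately show "\<exists>S\<subseteq>carrier G. separated G D S \<and> (\<Union>s\<in>S. act (inv\<^bsub>G\<^esub> s) ` U) = topspace X"
    using S by blast
qed

end
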